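(* Let $X$ be a compactum, let $n\geq2$, let $A\in F_n(X)$, and let $f:X\to X$ be a function. Consider the statements: (1) each $x\in A$ is a quasi-periodic point of $f$; (2) $A$ is a quasi-periodic point of $F_n(f)$; (3) $q(A)$ is a quasi-periodic point of $SF_n(f)$. Then (1) implies (2), and (2) implies (3).
   Context: A compactum is a nondegenerate compact, perfect, Hausdorff topological space. $F_n(X)$ is the set of nonempty subsets of $X$ with at most $n$ points, with the Vietoris topology; $F_1(X)=\{\{x\}:x\in X\}$; $F_n(f)(A)=f(A)$. For $n\geq2$, $SF_n(X)=F_n(X)/F_1(X)$ is the quotient collapsing $F_1(X)$ to a point, $q:F_n(X)\to SF_n(X)$ the quotient map, $F_X=q(F_1(X))$, and $SF_n(f)(\chi)=q(F_n(f)(q^{-1}(\chi)))$ for $\chi\neq F_X$, $SF_n(f)(F_X)=F_X$. A point $x$ is a quasi-periodic point of $g:Z\to Z$ if for every open $U\ni x$ there is $m\in\mathbb{N}$ with $g^{km}(x)\in U$ for all integers $k\geq0$. *)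

theory Defs
  imports "HOL-Analysis.Analysis"
begin

definition compactum :: "'a topology \<Rightarrow> bool" where
  "compactum X \<longleftrightarrow> compact_space X \<and> Hausdorff_space X
     \<and> X derived_set_of (topspace X) = topspace X
     \<and> (\<exists>x\<in>topspace X. \<exists>y\<in>topspace X. x \<noteq> y)"

definition Fn :: "'a topology \<Rightarrow> nat \<Rightarrow> 'a set set" where
  "Fn X n = {A. A \<subseteq> topspace X \<and> A \<noteq> {} \<and> finite A \<and> card A \<le> n}"

definition F1 :: "'a topology \<Rightarrow> 'a set set" where
  "F1 X = {{x} | x. x \<in> topspace X}"

text \<open>Vietoris topology on F_n(X), generated by the subbasic sets
  <U> = {A. A \<subseteq> U} and [U] = {A. A \<inter> U \<noteq> {}} for U open in X (intersected with F_n(X)).\<close>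
definition Fn_top :: "'a topology \<Rightarrow> nat \<Rightarrow> 'a set topology" where
  "Fn_top X n = topology (generate_topology_on
      ({{A \<in> Fn X n. A \<subseteq> U} | U. openin X U} \<union> {{A \<in> Fn X n. A \<inter> U \<noteq> {}} | U. openin X U}))"

definition Fn_map :: "('a \<Rightarrow> 'a) \<Rightarrow> 'a set \<Rightarrow> 'a set" where
  "Fn_map f A = f ` A"

text \<open>Quotient map q : F_n(X) \<rightarrow> SF_n(X) = F_n(X)/F_1(X); a point of SF_n(X) is an
  equivalence class, i.e. a subset of F_n(X): either F_1(X) itself (the point F_X) or a singleton {A}.\<close>
definition qmap :: "'a topology \<Rightarrow> 'a set \<Rightarrow> 'a set set" where
  "qmap X A = (if A \<in> F1 X then F1 X else {A})"

text \<open>Quotient topology on SF_n(X): V is open iff q^{-1}(V) (= \<Union>V) is open in F_n(X).\<close>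
definition SFn_top :: "'a topology \<Rightarrow> nat \<Rightarrow> 'a set set topology" where
  "SFn_top X n = topology (\<lambda>V. V \<subseteq> qmap X ` Fn X n \<and> openin (Fn_top X n) (\<Union>V))"

lemma openin_Fn_top:
  "openin (Fn_top X n) = generate_topology_on
      ({{A \<in> Fn X n. A \<subseteq> U} | U. openin X U} \<union> {{A \<in> Fn X n. A \<inter> U \<noteq> {}} | U. openin X U})"
  unfolding Fn_top_def by (simp add: istopology_generate_topology_on)

lemma istopology_SFn: "istopology (\<lambda>V. V \<subseteq> qmap X ` Fn X n \<and> openin (Fn_top X n) (\<Union>V))"
  unfolding istopology_def
proof (rule conjI; intro allI impI)
  fix S T :: "'a set set set"
  assume "S \<subseteq> qmap X ` Fn X n \<and> openin (Fn_top X n) (\<Union>S)"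
    and "T \<subseteq> qmap X ` Fn X n \<and> openin (Fn_top X n) (\<Union>T)"
  moreover have "\<Union>(S \<inter> T) = \<Union>S \<inter> \<Union>T"
  proof
    show "\<Union>S \<inter> \<Union>T \<subseteq> \<Union>(S \<inter> T)"
    proof
      fix A assume "A \<in> \<Union>S \<inter> \<Union>T"
      then obtain s t where st: "s \<in> S" "t \<in> T" "A \<in> s" "A \<in> t" by blast
      have "s = t" using st calculation unfolding qmap_def by (auto split: if_splits)
      then show "A \<in> \<Union>(S \<inter> T)" using st by blast
    qed
  qed blast
  ultimately show "S \<inter> T \<subseteq> qmap X ` Fn X n \<and> openin (Fn_top X n) (\<Union>(S \<inter> T))"
    by (auto intro!: openin_Int)
next
  fix K :: "'a set set set set"
  assume "\<forall>S\<in>K. S \<subseteq> qmap X ` Fn X n \<and> openin (Fn_top X n) (\<Union>S)"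
  then show "\<Union>K \<subseteq> qmap X ` Fn X n \<and> openin (Fn_top X n) (\<Union>(\<Union>K))"
  proof -
    have "\<Union>(\<Union>K) = \<Union>(Union ` K)" by blast
    moreover have "openin (Fn_top X n) (\<Union>(Union ` K))"
      using \<open>\<forall>S\<in>K. _\<close> by (intro openin_Union) auto
    ultimately show ?thesis using \<open>\<forall>S\<in>K. _\<close> by auto
  qed
qed

lemma openin_SFn_top:
  "openin (SFn_top X n) = (\<lambda>V. V \<subseteq> qmap X ` Fn X n \<and> openin (Fn_top X n) (\<Union>V))"
  unfolding SFn_top_def using istopology_SFn by (rule topology_inverse')

definition SFn_map :: "'a topology \<Rightarrow> ('a \<Rightarrow> 'a) \<Rightarrow> 'a set set \<Rightarrow> 'a set set" where
  "SFn_map X f c = (if c = F1 X then F1 X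
                     else qmap X (Fn_map f (THE A. c = {A})))"

definition quasi_periodic_point :: "'b topology \<Rightarrow> ('b \<Rightarrow> 'b) \<Rightarrow> 'b \<Rightarrow> bool" where
  "quasi_periodic_point Z g x \<longleftrightarrow>
     (\<forall>U. openin Z U \<and> x \<in> U \<longrightarrow> (\<exists>m::nat. m \<ge> 1 \<and> (\<forall>k::nat. (g ^^ (k * m)) x \<in> U)))"

end

theory Submission
  imports Defs
begin

lemma Fn_map_iter: "(Fn_map f ^^ j) A = (f ^^ j) ` A"
  by (induction j) (auto simp: Fn_map_def image_comp)

lemma iter_top: "\<forall>x\<in>topspace X. f x \<in> topspace X \<Longrightarrow> x \<in> topspace X \<Longrightarrow> (f ^^ j) x \<in> topspace X"
  by (induction j) auto

lemma iter_Fn: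
  assumes "\<forall>x\<in>topspace X. f x \<in> topspace X" "A \<in> Fn X n"
  shows "(f ^^ j) ` A \<in> Fn X n"
proof -
  have "card ((f ^^ j) ` A) \<le> card A" using assms(2) by (intro card_image_le) (auto simp: Fn_def)
  then show ?thesis using assms iter_top[OF assms(1)] by (auto simp: Fn_def)
qed

lemma part1:
  assumes top: "\<forall>x\<in>topspace X. f x \<in> topspace X" and AFn: "A \<in> Fn X n"
    and qp: "\<forall>x\<in>A. quasi_periodic_point X f x"
  shows "quasi_periodic_point (Fn_top X n) (Fn_map f) A"
  unfolding quasi_periodic_point_def openin_Fn_top Fn_map_iter
proof (intro allI impI, elim conjE)
  fix W
  assume "generate_topology_on
      ({{A \<in> Fn X n. A \<subseteq> U} | U. openin X U} \<union> {{A \<in> Fn X n. A \<inter> U \<noteq> {}} | U. openin X U}) W"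
    and "A \<in> W"
  then show "\<exists>m\<ge>1. \<forall>k. (f ^^ (k * m)) ` A \<in> W"
  proof (induction)
    case Empty
    then show ?case by simp
  next
    case (Int a b)
    then obtain m1 m2 where m1: "m1 \<ge> 1" "\<forall>k. (f ^^ (k * m1)) ` A \<in> a"
      and m2: "m2 \<ge> 1" "\<forall>k. (f ^^ (k * m2)) ` A \<in> b" by blast
    have "\<forall>k. (f ^^ (k * (m1*m2))) ` A \<in> a \<inter> b"
    proof
      fix k
      have "(f ^^ ((k*m2) * m1)) ` A \<in> a" "(f ^^ ((k*m1) * m2)) ` A \<in> b" using m1 m2 by blast+
      then show "(f ^^ (k * (m1*m2))) ` A \<in> a \<inter> b" by (simp add: ac_simps)
    qed
    moreover have "m1*m2 \<ge> 1" using m1 m2 by simp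
    ultimately show ?case by blast
  next
    case (UN K)
    then obtain k where "k \<in> K" "A \<in> k" by blast
    then show ?case using UN.IH by blast
  next
    case (Basis s)
    then consider U where "openin X U" "s = {B \<in> Fn X n. B \<subseteq> U}"
      | U where "openin X U" "s = {B \<in> Fn X n. B \<inter> U \<noteq> {}}" by blast
    then show ?case
    proof cases
      case 1
      then have AU: "A \<subseteq> U" using Basis by auto
      have "\<forall>x\<in>A. \<exists>m\<ge>1. \<forall>k. (f ^^ (k * m)) x \<in> U"
        using qp AU 1 unfolding quasi_periodic_point_def by blast
      from bchoice[OF this] obtain m where m0: "\<forall>x\<in>A. m x \<ge> 1 \<and> (\<forall>k. (f ^^ (k * m x)) x \<in> U)"
        by blast
      then have m: "\<And>x. x \<in> A \<Longrightarrow> m x \<ge> 1 \<and> (\<forall>k. (f ^^ (k * m x)) x \<in> U)" by blast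
      define M where "M = (\<Prod>x\<in>A. m x)"
      have finA: "finite A" using Basis by (auto simp: Fn_def)
      have "M > 0" unfolding M_def by (intro prod_pos) (use m in fastforce)
      then have M1: "M \<ge> 1" by simp
      have "\<forall>k. (f ^^ (k * M)) ` A \<in> s"
      proof
        fix k
        have "(f ^^ (k * M)) x \<in> U" if "x \<in> A" for x
        proof -
          have "m x dvd M" unfolding M_def using finA that by (simp add: dvd_prodI)
          then obtain c where "M = m x * c" by blast
          then have "k * M = (k * c) * m x" by simp
          moreover have "(f ^^ ((k*c) * m x)) x \<in> U" using m[OF that] by blast
          ultimately show ?thesis by (simp only:)
        qed
        then have "(f ^^ (k * M)) ` A \<subseteq> U" by blast
        then show "(f ^^ (k * M)) ` A \<in> s" using 1 iter_Fn[OF top AFn, of "k*M"] by simp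
      qed
      then show ?thesis using M1 by blast
    next
      case 2
      then obtain x where x: "x \<in> A" "x \<in> U" using Basis by auto
      then obtain m where m: "m \<ge> 1" "\<forall>k. (f ^^ (k * m)) x \<in> U"
        using qp 2 unfolding quasi_periodic_point_def by blast
      have "\<forall>k. (f ^^ (k * m)) ` A \<in> s"
      proof
        fix k
        have "(f ^^ (k * m)) x \<in> (f ^^ (k * m)) ` A \<inter> U" using m x by blast
        then show "(f ^^ (k * m)) ` A \<in> s" using 2 iter_Fn[OF top AFn, of "k*m"] by blast
      qed
      then show ?thesis using m by blast
    qed
  qed
qed

lemma F1_not_single:
  assumes "compactum X" shows "F1 X \<noteq> {B}"
proof
  assume h: "F1 X = {B}"
  obtain x y where "x \<in> topspace X" "y \<in> topspace X" "x \<noteq> y" using assms by (auto simp: compactum_def)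
  then have "{x} \<in> F1 X" "{y} \<in> F1 X" by (auto simp: F1_def)
  with h \<open>x \<noteq> y\<close> show False by auto
qed

lemma SFn_comm:
  assumes "compactum X" "\<forall>x\<in>topspace X. f x \<in> topspace X" "B \<subseteq> topspace X"
  shows "SFn_map X f (qmap X B) = qmap X (Fn_map f B)"
proof (cases "B \<in> F1 X")
  case True
  then obtain x where "B = {x}" "x \<in> topspace X" by (auto simp: F1_def)
  then have "Fn_map f B \<in> F1 X" using assms(2) by (auto simp: F1_def Fn_map_def)
  then show ?thesis using True by (simp add: qmap_def SFn_map_def)
next
  case False
  then show ?thesis using F1_not_single[OF assms(1), of B] by (simp add: qmap_def SFn_map_def)
qed

lemma SFn_iter:
  assumes "compactum X" "\<forall>x\<in>topspace X. f x \<in> topspace X" "A \<subseteq> topspace X"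
  shows "(SFn_map X f ^^ j) (qmap X A) = qmap X ((f ^^ j) ` A)"
proof (induction j)
  case 0 then show ?case by simp
next
  case (Suc j)
  have "(f ^^ j) ` A \<subseteq> topspace X" using assms iter_top[OF assms(2)] by auto
  then show ?case using Suc SFn_comm[OF assms(1,2)] by (simp add: Fn_map_def image_comp)
qed

lemma part2:
  assumes c: "compactum X" and top: "\<forall>x\<in>topspace X. f x \<in> topspace X" and A: "A \<in> Fn X n"
    and qp: "quasi_periodic_point (Fn_top X n) (Fn_map f) A"
  shows "quasi_periodic_point (SFn_top X n) (SFn_map X f) (qmap X A)"
  unfolding quasi_periodic_point_def openin_SFn_top
proof (intro allI impI, elim conjE)
  fix V assume Vsub: "V \<subseteq> qmap X ` Fn X n" and Vo: "openin (Fn_top X n) (\<Union>V)"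
    and AV: "qmap X A \<in> V"
  have "A \<in> qmap X A" by (simp add: qmap_def)
  then have "A \<in> \<Union>V" using AV by blast
  then obtain m where m: "m \<ge> 1" "\<forall>k. (f ^^ (k * m)) ` A \<in> \<Union>V"
    using qp Vo unfolding quasi_periodic_point_def Fn_map_iter by blast
  have AT: "A \<subseteq> topspace X" using A by (auto simp: Fn_def)
  have "(SFn_map X f ^^ (k * m)) (qmap X A) \<in> V" for k
  proof -
    obtain v where v: "v \<in> V" "(f ^^ (k * m)) ` A \<in> v" using m by blast
    then obtain B where B: "v = qmap X B" using Vsub by blast
    have "qmap X ((f ^^ (k * m)) ` A) = v"
      using v B by (auto simp: qmap_def split: if_splits)
    then show ?thesis using SFn_iter[OF c top AT] v by simp
  qed
  then show "\<exists>m\<ge>1. \<forall>k. (SFn_map X f ^^ (k * m)) (qmap X A) \<in> V" using m by blast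
qed

theorem theorem6:
  fixes X :: "'a topology" and n :: nat and A :: "'a set" and f :: "'a \<Rightarrow> 'a"
  assumes "compactum X"
    and "n \<ge> 2"
    and "A \<in> Fn X n"
    and "\<forall>x\<in>topspace X. f x \<in> topspace X"
  shows "((\<forall>x\<in>A. quasi_periodic_point X f x)
            \<longrightarrow> quasi_periodic_point (Fn_top X n) (Fn_map f) A)
       \<and> (quasi_periodic_point (Fn_top X n) (Fn_map f) A
            \<longrightarrow> quasi_periodic_point (SFn_top X n) (SFn_map X f) (qmap X A))"
  using part1[OF assms(4,3)] part2[OF assms(1,4,3)] by blast

end
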